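(* Let $X,Y,Z$ be shift spaces, $\phi_1 : X \to Z$ and $\phi_2 : Y \to Z$ codes, and let $\Sigma = \{(x,y) \in X \times Y : \phi_1(x) = \phi_2(y)\}$ with $\psi_1 : \Sigma \to X$, $\psi_1(x,y)=x$, and $\psi_2 : \Sigma \to Y$, $\psi_2(x,y) = y$. Then: (1) If $\phi_1$ is open, then $\psi_2$ is open. (2) If $\phi_2$ is onto and $\psi_2$ is open, then $\phi_1$ is open.
   Context: Shift spaces are closed shift-invariant subsets of $\mathcal{A}^{\mathbb{Z}}$; a code is a continuous shift-commuting map. $\Sigma$ (with coordinatewise shift) is a shift space, called the fiber product. Open: images of open sets are open. *)

theory Defs
  imports "HOL-Analysis.Analysis"
begin

definition shift :: "(int \<Rightarrow> 'a) \<Rightarrow> (int \<Rightarrow> 'a)" where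
  "shift x = (\<lambda>i. x (i + 1))"

definition full_shift_top :: "'a set \<Rightarrow> (int \<Rightarrow> 'a) topology" where
  "full_shift_top A = product_topology (\<lambda>_. discrete_topology A) UNIV"

definition shift_space :: "'a set \<Rightarrow> (int \<Rightarrow> 'a) set \<Rightarrow> bool" where
  "shift_space A X \<longleftrightarrow> finite A \<and> closedin (full_shift_top A) X \<and> shift ` X = X"

definition shift_top :: "'a set \<Rightarrow> (int \<Rightarrow> 'a) set \<Rightarrow> (int \<Rightarrow> 'a) topology" where
  "shift_top A X = subtopology (full_shift_top A) X"

definition is_code :: "'a set \<Rightarrow> (int \<Rightarrow> 'a) set \<Rightarrow> 'b set \<Rightarrow> (int \<Rightarrow> 'b) set
    \<Rightarrow> ((int \<Rightarrow> 'a) \<Rightarrow> (int \<Rightarrow> 'b)) \<Rightarrow> bool" where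
  "is_code A X B Y \<phi> \<longleftrightarrow> \<phi> ` X \<subseteq> Y
     \<and> continuous_map (shift_top A X) (shift_top B Y) \<phi>
     \<and> (\<forall>x\<in>X. \<phi> (shift x) = shift (\<phi> x))"

text \<open>Fiber product and its topology (the product topology on X \<times> Y restricted to it;
  this is the topology of the shift space of pairs under the obvious identification).\<close>
definition fiber_product :: "(int \<Rightarrow> 'a) set \<Rightarrow> (int \<Rightarrow> 'b) set
    \<Rightarrow> ((int \<Rightarrow> 'a) \<Rightarrow> 'z) \<Rightarrow> ((int \<Rightarrow> 'b) \<Rightarrow> 'z) \<Rightarrow> ((int \<Rightarrow> 'a) \<times> (int \<Rightarrow> 'b)) set" where
  "fiber_product X Y \<phi>1 \<phi>2 = {(x, y). x \<in> X \<and> y \<in> Y \<and> \<phi>1 x = \<phi>2 y}"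

definition fiber_top :: "'a set \<Rightarrow> (int \<Rightarrow> 'a) set \<Rightarrow> 'b set \<Rightarrow> (int \<Rightarrow> 'b) set
    \<Rightarrow> ((int \<Rightarrow> 'a) \<Rightarrow> 'z) \<Rightarrow> ((int \<Rightarrow> 'b) \<Rightarrow> 'z) \<Rightarrow> ((int \<Rightarrow> 'a) \<times> (int \<Rightarrow> 'b)) topology" where
  "fiber_top A X B Y \<phi>1 \<phi>2 =
     subtopology (prod_topology (shift_top A X) (shift_top B Y)) (fiber_product X Y \<phi>1 \<phi>2)"

end

theory Submission
  imports Defs
begin

lemma topspace_shift_top:
  assumes "shift_space A X" shows "topspace (shift_top A X) = X"
  using assms closedin_subset unfolding shift_space_def shift_top_def by fastforce

lemma compact_shift:
  assumes "shift_space A X" shows "compact_space (shift_top A X)"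
proof -
  have "compact_space (full_shift_top A)"
    using assms unfolding shift_space_def full_shift_top_def
    by (simp add: compact_space_product_topology compact_space_discrete_topology)
  then have "compactin (full_shift_top A) X"
    using assms closedin_compact_space unfolding shift_space_def by blast
  then show ?thesis unfolding shift_top_def by (rule compact_space_subtopology)
qed

lemma hausdorff_shift:
  shows "Hausdorff_space (shift_top A X)"
  unfolding shift_top_def full_shift_top_def
  by (intro Hausdorff_space_subtopology) (simp add: Hausdorff_space_product_topology)

theorem lemma2p4:
  fixes A :: "'a set" and B :: "'b set" and C :: "'c set"
    and X :: "(int \<Rightarrow> 'a) set" and Y :: "(int \<Rightarrow> 'b) set" and Z :: "(int \<Rightarrow> 'c) set"
    and \<phi>1 :: "(int \<Rightarrow> 'a) \<Rightarrow> (int \<Rightarrow> 'c)" and \<phi>2 :: "(int \<Rightarrow> 'b) \<Rightarrow> (int \<Rightarrow> 'c)"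
  assumes "shift_space A X" and "shift_space B Y" and "shift_space C Z"
    and "is_code A X C Z \<phi>1" and "is_code B Y C Z \<phi>2"
  shows "(open_map (shift_top A X) (shift_top C Z) \<phi>1
            \<longrightarrow> open_map (fiber_top A X B Y \<phi>1 \<phi>2) (shift_top B Y) snd)
       \<and> (\<phi>2 ` Y = Z \<and> open_map (fiber_top A X B Y \<phi>1 \<phi>2) (shift_top B Y) snd
            \<longrightarrow> open_map (shift_top A X) (shift_top C Z) \<phi>1)"
proof (intro conjI impI)
  have tX: "topspace (shift_top A X) = X" using assms(1) by (rule topspace_shift_top)
  have tY: "topspace (shift_top B Y) = Y" using assms(2) by (rule topspace_shift_top)
  have tZ: "topspace (shift_top C Z) = Z" using assms(3) by (rule topspace_shift_top)
  have c1: "continuous_map (shift_top A X) (shift_top C Z) \<phi>1" and i1: "\<phi>1 ` X \<subseteq> Z"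
    using assms(4) unfolding is_code_def by auto
  have c2: "continuous_map (shift_top B Y) (shift_top C Z) \<phi>2" and i2: "\<phi>2 ` Y \<subseteq> Z"
    using assms(5) unfolding is_code_def by auto
  let ?S = "fiber_product X Y \<phi>1 \<phi>2"
  {
    assume om: "open_map (shift_top A X) (shift_top C Z) \<phi>1"
    show "open_map (fiber_top A X B Y \<phi>1 \<phi>2) (shift_top B Y) snd"
      unfolding open_map_def
    proof (intro allI impI)
      fix W assume "openin (fiber_top A X B Y \<phi>1 \<phi>2) W"
      then obtain P where P: "openin (prod_topology (shift_top A X) (shift_top B Y)) P"
        and W: "W = P \<inter> ?S"
        unfolding fiber_top_def openin_subtopology by blast
      show "openin (shift_top B Y) (snd ` W)"
      proof (subst openin_subopen, intro ballI)
        fix y assume "y \<in> snd ` W"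
        then obtain x where xy: "(x,y) \<in> P" "(x,y) \<in> ?S" using W by force
        then obtain U V where UV: "openin (shift_top A X) U" "openin (shift_top B Y) V"
          "x \<in> U" "y \<in> V" "U \<times> V \<subseteq> P"
          using P openin_prod_topology_alt by metis
        have "openin (shift_top C Z) (\<phi>1 ` U)" using om UV(1) unfolding open_map_def by blast
        then have o2: "openin (shift_top B Y) {y \<in> topspace (shift_top B Y). \<phi>2 y \<in> \<phi>1 ` U}"
          using c2 openin_continuous_map_preimage by blast
        define T where "T = V \<inter> {y \<in> topspace (shift_top B Y). \<phi>2 y \<in> \<phi>1 ` U}"
        have "openin (shift_top B Y) T" unfolding T_def using UV(2) o2 by blast
        moreover have "y \<in> T" unfolding T_def using xy UV tY
          by (auto simp: fiber_product_def intro: image_eqI[where x=x])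
        moreover have "T \<subseteq> snd ` W"
        proof
          fix y' assume "y' \<in> T"
          then obtain x' where "x' \<in> U" "\<phi>2 y' = \<phi>1 x'" "y' \<in> V" "y' \<in> Y"
            unfolding T_def tY by auto
          moreover have "x' \<in> X" using \<open>x' \<in> U\<close> UV(1) openin_subset tX by blast
          ultimately have "(x',y') \<in> W" using W UV(5) by (auto simp: fiber_product_def)
          then show "y' \<in> snd ` W" by force
        qed
        ultimately show "\<exists>T. openin (shift_top B Y) T \<and> y \<in> T \<and> T \<subseteq> snd ` W" by blast
      qed
    qed
  }
  {
    assume a: "\<phi>2 ` Y = Z \<and> open_map (fiber_top A X B Y \<phi>1 \<phi>2) (shift_top B Y) snd"
    show "open_map (shift_top A X) (shift_top C Z) \<phi>1"
      unfolding open_map_def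
    proof (intro allI impI)
      fix U assume U: "openin (shift_top A X) U"
      have UX: "U \<subseteq> X" using U openin_subset tX by blast
      have "openin (prod_topology (shift_top A X) (shift_top B Y)) (U \<times> Y)"
        using U tY by (metis openin_prod_Times_iff openin_topspace)
      then have "openin (fiber_top A X B Y \<phi>1 \<phi>2) ((U \<times> Y) \<inter> ?S)"
        unfolding fiber_top_def openin_subtopology by blast
      then have So: "openin (shift_top B Y) (snd ` ((U \<times> Y) \<inter> ?S))"
        using a unfolding open_map_def by blast
      define S where "S = snd ` ((U \<times> Y) \<inter> ?S)"
      have "closedin (shift_top B Y) (Y - S)" using So tY unfolding S_def
        by (metis closedin_diff closedin_topspace)
      then have "compactin (shift_top B Y) (Y - S)"
        using closedin_compact_space compact_shift assms(2) by blast
      then have "compactin (shift_top C Z) (\<phi>2 ` (Y - S))" using c2 image_compactin by blast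
      then have cl: "closedin (shift_top C Z) (\<phi>2 ` (Y - S))"
        using compactin_imp_closedin hausdorff_shift by blast
      have eq: "\<phi>1 ` U = Z - \<phi>2 ` (Y - S)"
      proof
        show "\<phi>1 ` U \<subseteq> Z - \<phi>2 ` (Y - S)"
        proof
          fix z assume "z \<in> \<phi>1 ` U"
          then obtain x where x: "x \<in> U" "z = \<phi>1 x" by blast
          have "z \<in> Z" using x UX i1 by blast
          moreover have "z \<notin> \<phi>2 ` (Y - S)"
          proof
            assume "z \<in> \<phi>2 ` (Y - S)"
            then obtain y where "y \<in> Y" "y \<notin> S" "\<phi>2 y = z" by blast
            moreover have "(x,y) \<in> (U \<times> Y) \<inter> ?S"
              using x UX calculation by (auto simp: fiber_product_def)
            ultimately show False unfolding S_def by force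
          qed
          ultimately show "z \<in> Z - \<phi>2 ` (Y - S)" by blast
        qed
        show "Z - \<phi>2 ` (Y - S) \<subseteq> \<phi>1 ` U"
        proof
          fix z assume z: "z \<in> Z - \<phi>2 ` (Y - S)"
          then obtain y where y: "y \<in> Y" "\<phi>2 y = z" using a by blast
          then have "y \<in> S" using z by blast
          then obtain x where "x \<in> U" "\<phi>1 x = \<phi>2 y"
            unfolding S_def by (auto simp: fiber_product_def)
          then show "z \<in> \<phi>1 ` U" using y by (metis image_eqI)
        qed
      qed
      show "openin (shift_top C Z) (\<phi>1 ` U)"
        unfolding eq using cl tZ by (metis openin_diff openin_topspace)
    qed
  }
qed

end
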